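(* Admissible semantics (the map $F\mapsto \mathrm{adm}(F)$, the set of admissible sets of $F$) is serialisable with the selection function $\alpha_{adm}(X,Y,Z)=X\cup Y\cup Z$ and the termination function $\beta_{adm}(F,S)=1$ for all $F,S$.
   Context: An abstract argumentation framework (AF) is a pair $F=(A,R)$ with $A$ a finite subset of a fixed universal set of arguments $\mathfrak{A}$ and $R\subseteq A\times A$ ($a\to b$ means $(a,b)\in R$). For $S\subseteq A$: $S^+=\{a\mid \exists b\in S: b\to a\}$, $S^-=\{a\mid\exists b\in S: a\to b\}$; for sets $S,S'$, $S\to S'$ means $S^+\cap S'\neq\emptyset$. $S$ is conflict-free if no $a,b\in S$ with $a\to b$; $S$ defends $b$ if every attacker of $b$ is attacked by some element of $S$; $S$ is admissible if conflict-free and defends all its elements. An initial set is a non-empty admissible set with no non-empty admissible proper subset; $\mathrm{IS}(F)$ is the set of initial sets. An initial set $S$ is unattacked if $S^-=\emptyset$; unchallenged if $S^-\neq\emptyset$ and no $S'\in\mathrm{IS}(F)$ has $S'\to S$; challenged if some $S'\in\mathrm{IS}(F)$ has $S'\to S$. Write $\mathrm{IS}^{u}(F),\mathrm{IS}^{uc}(F),\mathrm{IS}^{c}(F)$ for the sets of unattacked, unchallenged, challenged initial sets. The reduct is $F^S=(A',R\cap(A'\times A'))$ with $A'=A\setminus(S\cup S^+)$. A selection function $\alpha$ maps any three sets $X,Y,Z$ of sets of arguments to a subset $\alpha(X,Y,Z)\subseteq X\cup Y\cup Z$. A termination function $\beta$ maps pairs $(F,S)$ (AF, set of arguments) to $\{0,1\}$.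 A state is a pair $(F,S)$; there is a transition $(F,S)\to(F^{S'},S\cup S')$ whenever $S'\in\alpha(\mathrm{IS}^u(F),\mathrm{IS}^{uc}(F),\mathrm{IS}^c(F))$. Write $(F,S)\leadsto^{\alpha}(F',S')$ if $(F',S')$ is reachable in finitely many (possibly zero) transitions, and $(F,S)\leadsto^{\alpha,\beta}(F',S')$ if moreover $\beta(F',S')=1$. Let $\mathcal{E}^{\alpha,\beta}(F)$ be the set of all $S$ with $(F,\emptyset)\leadsto^{\alpha,\beta}(F',S)$ for some $F'$. A semantics $\sigma$ (assigning to each AF a set $\sigma(F)$ of sets of arguments) is serialisable with $\alpha,\beta$ if $\sigma(F)=\mathcal{E}^{\alpha,\beta}(F)$ for all AFs $F$. *)

theory Defs
  imports Main
begin

type_synonym 'a af = "'a set \<times> ('a \<times> 'a) set"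

definition is_af :: "'a af \<Rightarrow> bool" where
  "is_af F \<longleftrightarrow> finite (fst F) \<and> snd F \<subseteq> fst F \<times> fst F"

definition splus :: "'a af \<Rightarrow> 'a set \<Rightarrow> 'a set" where
  "splus F S = {a. \<exists>b\<in>S. (b, a) \<in> snd F}"

definition sminus :: "'a af \<Rightarrow> 'a set \<Rightarrow> 'a set" where
  "sminus F S = {a. \<exists>b\<in>S. (a, b) \<in> snd F}"

definition set_attacks :: "'a af \<Rightarrow> 'a set \<Rightarrow> 'a set \<Rightarrow> bool" where
  "set_attacks F S S' \<longleftrightarrow> splus F S \<inter> S' \<noteq> {}"

definition conflict_free :: "'a af \<Rightarrow> 'a set \<Rightarrow> bool" where
  "conflict_free F S \<longleftrightarrow> \<not> (\<exists>a\<in>S. \<exists>b\<in>S. (a, b) \<in> snd F)"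

definition defends :: "'a af \<Rightarrow> 'a set \<Rightarrow> 'a \<Rightarrow> bool" where
  "defends F S b \<longleftrightarrow> (\<forall>a. (a, b) \<in> snd F \<longrightarrow> (\<exists>c\<in>S. (c, a) \<in> snd F))"

definition admissible :: "'a af \<Rightarrow> 'a set \<Rightarrow> bool" where
  "admissible F S \<longleftrightarrow> S \<subseteq> fst F \<and> conflict_free F S \<and> (\<forall>b\<in>S. defends F S b)"

definition adm :: "'a af \<Rightarrow> 'a set set" where
  "adm F = {S. admissible F S}"

definition IS :: "'a af \<Rightarrow> 'a set set" where
  "IS F = {S. S \<noteq> {} \<and> admissible F S \<and> \<not> (\<exists>S'. S' \<subset> S \<and> S' \<noteq> {} \<and> admissible F S')}"

definition IS_u :: "'a af \<Rightarrow> 'a set set" where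
  "IS_u F = {S \<in> IS F. sminus F S = {}}"

definition IS_uc :: "'a af \<Rightarrow> 'a set set" where
  "IS_uc F = {S \<in> IS F. sminus F S \<noteq> {} \<and> \<not> (\<exists>S'\<in>IS F. set_attacks F S' S)}"

definition IS_c :: "'a af \<Rightarrow> 'a set set" where
  "IS_c F = {S \<in> IS F. \<exists>S'\<in>IS F. set_attacks F S' S}"

definition reduct :: "'a af \<Rightarrow> 'a set \<Rightarrow> 'a af" where
  "reduct F S = (let A' = fst F - (S \<union> splus F S) in (A', snd F \<inter> (A' \<times> A')))"

text \<open>Selection functions: 'a set set => 'a set set => 'a set set => 'a set set;
  termination functions: 'a af => 'a set => bool (True = 1).\<close>

definition transition ::
  "('a set set \<Rightarrow> 'a set set \<Rightarrow> 'a set set \<Rightarrow> 'a set set)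
   \<Rightarrow> ('a af \<times> 'a set) \<Rightarrow> ('a af \<times> 'a set) \<Rightarrow> bool" where
  "transition \<alpha> st st' \<longleftrightarrow>
     (\<exists>S'\<in>\<alpha> (IS_u (fst st)) (IS_uc (fst st)) (IS_c (fst st)).
        st' = (reduct (fst st) S', snd st \<union> S'))"

definition reaches ::
  "('a set set \<Rightarrow> 'a set set \<Rightarrow> 'a set set \<Rightarrow> 'a set set)
   \<Rightarrow> ('a af \<times> 'a set) \<Rightarrow> ('a af \<times> 'a set) \<Rightarrow> bool" where
  "reaches \<alpha> = (transition \<alpha>)\<^sup>*\<^sup>*"

definition serial_ext ::
  "('a set set \<Rightarrow> 'a set set \<Rightarrow> 'a set set \<Rightarrow> 'a set set)
   \<Rightarrow> ('a af \<Rightarrow> 'a set \<Rightarrow> bool) \<Rightarrow> 'a af \<Rightarrow> 'a set set" where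
  "serial_ext \<alpha> \<beta> F = {S. \<exists>F'. reaches \<alpha> (F, {}) (F', S) \<and> \<beta> F' S}"

definition serialisable ::
  "('a af \<Rightarrow> 'a set set)
   \<Rightarrow> ('a set set \<Rightarrow> 'a set set \<Rightarrow> 'a set set \<Rightarrow> 'a set set)
   \<Rightarrow> ('a af \<Rightarrow> 'a set \<Rightarrow> bool) \<Rightarrow> bool" where
  "serialisable \<sigma> \<alpha> \<beta> \<longleftrightarrow> (\<forall>F. is_af F \<longrightarrow> \<sigma> F = serial_ext \<alpha> \<beta> F)"

definition alpha_adm :: "'a set set \<Rightarrow> 'a set set \<Rightarrow> 'a set set \<Rightarrow> 'a set set" where
  "alpha_adm X Y Z = X \<union> Y \<union> Z"

definition beta_adm :: "'a af \<Rightarrow> 'a set \<Rightarrow> bool" where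
  "beta_adm F S = True"

end

theory Submission
  imports Defs
begin

lemma alpha_IS: "alpha_adm (IS_u G) (IS_uc G) (IS_c G) = IS G"
  unfolding alpha_adm_def IS_u_def IS_uc_def IS_c_def by blast

lemma trans_adm: "transition alpha_adm st st' \<longleftrightarrow> (\<exists>S'\<in>IS (fst st). st' = (reduct (fst st) S', snd st \<union> S'))"
  unfolding transition_def alpha_IS by simp

lemma reduct_empty: "is_af F \<Longrightarrow> reduct F {} = F"
  unfolding reduct_def is_af_def splus_def by (cases F) auto

lemma reduct_reduct:
  assumes "S' \<subseteq> fst (reduct F S)"
  shows "reduct (reduct F S) S' = reduct F (S \<union> S')"
proof -
  obtain A R where F: "F = (A, R)" by (cases F)
  define A' where "A' = A - (S \<union> splus F S)"
  define A'' where "A'' = A - ((S \<union> S') \<union> splus F (S \<union> S'))"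
  have r1: "reduct F S = (A', R \<inter> (A' \<times> A'))" unfolding reduct_def A'_def Let_def F by simp
  have r2: "reduct F (S \<union> S') = (A'', R \<inter> (A'' \<times> A''))" unfolding reduct_def A''_def Let_def F by simp
  have sub: "S' \<subseteq> A'" using assms r1 by simp
  have sp: "splus (A', R \<inter> (A' \<times> A')) S' = splus F S' \<inter> A'"
    using sub unfolding splus_def F by auto
  have spu: "splus F (S \<union> S') = splus F S \<union> splus F S'"
    unfolding splus_def by blast
  have eqA: "A' - (S' \<union> (splus F S' \<inter> A')) = A''"
    unfolding A'_def A''_def spu by blast
  have sA: "A'' \<subseteq> A'" unfolding A'_def A''_def spu by blast
  have "reduct (A', R \<inter> (A' \<times> A')) S' = (A' - (S' \<union> (splus F S' \<inter> A')), R \<inter> (A' \<times> A') \<inter> ((A' - (S' \<union> (splus F S' \<inter> A'))) \<times> (A' - (S' \<union> (splus F S' \<inter> A')))))"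
    unfolding reduct_def Let_def sp by simp
  then have "reduct (A', R \<inter> (A' \<times> A')) S' = (A'', R \<inter> (A' \<times> A') \<inter> (A'' \<times> A''))"
    unfolding eqA .
  also have "R \<inter> (A' \<times> A') \<inter> (A'' \<times> A'') = R \<inter> (A'' \<times> A'')" using sA by blast
  finally show ?thesis using r1 r2 by simp
qed

lemma is_af_reduct: "is_af F \<Longrightarrow> is_af (reduct F S)"
  unfolding reduct_def is_af_def Let_def by auto

lemma adm_union:
  assumes af: "is_af F" and a: "admissible F S" and b: "admissible (reduct F S) S'"
  shows "admissible F (S \<union> S')"
proof -
  have sub: "S' \<subseteq> fst F - (S \<union> splus F S)" using b unfolding admissible_def reduct_def Let_def by auto
  have R: "snd F \<subseteq> fst F \<times> fst F" using af unfolding is_af_def by auto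
  have cf: "conflict_free F (S \<union> S')"
    unfolding conflict_free_def
  proof (intro notI, elim bexE)
    fix x y assume x: "x \<in> S \<union> S'" and y: "y \<in> S \<union> S'" and xy: "(x,y) \<in> snd F"
    show False
    proof (cases "x \<in> S")
      case True
      then have "y \<notin> S" using a y xy unfolding admissible_def conflict_free_def by blast
      then have "y \<in> S'" using y by blast
      then show False using sub True xy unfolding splus_def by blast
    next
      case False
      then have xs: "x \<in> S'" using x by blast
      show False
      proof (cases "y \<in> S")
        case True
        then obtain c where "c \<in> S" "(c,x) \<in> snd F" using a xy unfolding admissible_def defends_def by blast
        then show False using sub xs unfolding splus_def by blast
      next
        case False
        then have "y \<in> S'" using y by blast
        then have "(x,y) \<in> snd (reduct F S)" using sub xs xy unfolding reduct_def Let_def by auto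
        then show False using b xs \<open>y \<in> S'\<close> unfolding admissible_def conflict_free_def by blast
      qed
    qed
  qed
  have def: "\<forall>x\<in>S \<union> S'. defends F (S \<union> S') x"
  proof
    fix x assume x: "x \<in> S \<union> S'"
    show "defends F (S \<union> S') x"
      unfolding defends_def
    proof (intro allI impI)
      fix y assume yx: "(y,x) \<in> snd F"
      show "\<exists>c\<in>S \<union> S'. (c, y) \<in> snd F"
      proof (cases "x \<in> S")
        case True then show ?thesis using a yx unfolding admissible_def defends_def by blast
      next
        case False
        then have xs: "x \<in> S'" using x by blast
        show ?thesis
        proof (cases "y \<in> splus F S")
          case True then show ?thesis unfolding splus_def by blast
        next
          case False
          have "y \<notin> S" using xs sub yx unfolding splus_def by blast
          moreover have "y \<in> fst F" using R yx by blast
          ultimately have "y \<in> fst (reduct F S)" and "(y,x) \<in> snd (reduct F S)"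
            using False xs sub yx unfolding reduct_def Let_def by auto
          then obtain c where "c \<in> S'" "(c,y) \<in> snd (reduct F S)"
            using b xs unfolding admissible_def defends_def by blast
          then show ?thesis unfolding reduct_def Let_def by auto
        qed
      qed
    qed
  qed
  show ?thesis using cf def a sub unfolding admissible_def by blast
qed

lemma reach_adm:
  assumes "reaches alpha_adm (F, {}) (G, S)" and af: "is_af F"
  shows "admissible F S \<and> G = reduct F S"
  using assms(1) unfolding reaches_def
proof (induction rule: rtranclp_induct2)
  case refl
  then show ?case using af reduct_empty[OF af]
    unfolding admissible_def conflict_free_def by auto
next
  case (step G S G' S')
  then obtain T where T: "T \<in> IS G" "(G', S') = (reduct G T, S \<union> T)"
    unfolding trans_adm by auto
  have "admissible G T" using T unfolding IS_def by blast
  then have "admissible F (S \<union> T)" using adm_union[OF af] step by auto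
  moreover have "T \<subseteq> fst G" using \<open>admissible G T\<close> unfolding admissible_def by blast
  ultimately show ?case using T step reduct_reduct[of T F S] by auto
qed

lemma exists_IS:
  assumes "admissible F S" "S \<noteq> {}" "finite S"
  shows "\<exists>I. I \<subseteq> S \<and> I \<in> IS F"
proof -
  define P where "P I \<longleftrightarrow> I \<subseteq> S \<and> I \<noteq> {} \<and> admissible F I" for I
  define Q where "Q n \<longleftrightarrow> (\<exists>I. P I \<and> card I = n)" for n
  have "P S" unfolding P_def using assms by simp
  then have ex: "Q (card S)" unfolding Q_def by blast
  define n where "n = (LEAST n. Q n)"
  have "Q n" unfolding n_def by (rule LeastI[of Q, OF ex])
  then obtain I where I: "P I" "card I = n" unfolding Q_def by blast
  have min: "\<not> P J" if J: "J \<subset> I" for J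
  proof
    assume PJ: "P J"
    have "finite I" using I(1) assms(3) finite_subset unfolding P_def by blast
    then have "card J < card I" using J psubset_card_mono by blast
    then have "card J < n" using I(2) by simp
    then have "\<not> Q (card J)" unfolding n_def by (rule not_less_Least)
    then show False using PJ unfolding Q_def by blast
  qed
  have "I \<in> IS F"
  proof -
    have "I \<noteq> {}" "admissible F I" using I(1) unfolding P_def by auto
    moreover have "\<not> (\<exists>S'. S' \<subset> I \<and> S' \<noteq> {} \<and> admissible F S')"
    proof
      assume "\<exists>S'. S' \<subset> I \<and> S' \<noteq> {} \<and> admissible F S'"
      then obtain J where J: "J \<subset> I" "J \<noteq> {}" "admissible F J" by blast
      have "J \<subseteq> S" using J(1) I(1) unfolding P_def by blast
      then have "P J" using J unfolding P_def by blast
      then show False using min J(1) by blast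
    qed
    ultimately show ?thesis unfolding IS_def by blast
  qed
  moreover have "I \<subseteq> S" using I(1) unfolding P_def by blast
  ultimately show ?thesis by blast
qed

lemma adm_rest:
  assumes a: "admissible F S" and i: "admissible F I" "I \<subseteq> S"
  shows "admissible (reduct F I) (S - I)"
proof -
  have cfS: "\<And>x y. x \<in> S \<Longrightarrow> y \<in> S \<Longrightarrow> (x,y) \<notin> snd F"
    using a unfolding admissible_def conflict_free_def by blast
  have sub: "S - I \<subseteq> fst (reduct F I)"
  proof (rule subsetI)
    fix x assume x: "x \<in> S - I"
    then have "x \<in> fst F" using a unfolding admissible_def by blast
    moreover have "x \<notin> splus F I" using x i(2) cfS unfolding splus_def by blast
    ultimately show "x \<in> fst (reduct F I)" using x unfolding reduct_def Let_def by simp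
  qed
  show ?thesis
    unfolding admissible_def
  proof (intro conjI)
    show "S - I \<subseteq> fst (reduct F I)" by (rule sub)
    show "conflict_free (reduct F I) (S - I)"
      using cfS unfolding conflict_free_def reduct_def Let_def by auto
    show "\<forall>b\<in>S - I. defends (reduct F I) (S - I) b"
      unfolding defends_def
    proof (intro ballI allI impI)
      fix b y assume b: "b \<in> S - I" and yb: "(y,b) \<in> snd (reduct F I)"
      then have y: "y \<in> fst (reduct F I)" "(y,b) \<in> snd F" unfolding reduct_def Let_def by auto
      obtain c where c: "c \<in> S" "(c,y) \<in> snd F" using a b y unfolding admissible_def defends_def by blast
      have "c \<notin> I" using c y unfolding reduct_def Let_def splus_def by auto
      then have "c \<in> S - I" using c by blast
      then have "c \<in> fst (reduct F I)" using sub by blast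
      then show "\<exists>c\<in>S - I. (c, y) \<in> snd (reduct F I)"
        using \<open>c \<in> S - I\<close> c y unfolding reduct_def Let_def by auto
    qed
  qed
qed

lemma adm_reach:
  "is_af G \<Longrightarrow> admissible G S \<Longrightarrow> card S = n \<Longrightarrow> \<exists>G'. reaches alpha_adm (G, T) (G', T \<union> S)"
proof (induction n arbitrary: G S T rule: less_induct)
  case (less n)
  have fin: "finite S" using less.prems unfolding is_af_def admissible_def
    using finite_subset by blast
  show ?case
  proof (cases "S = {}")
    case True
    then show ?thesis unfolding reaches_def by (intro exI[of _ G]) simp
  next
    case False
    obtain I where I: "I \<subseteq> S" "I \<in> IS G" using exists_IS[OF less.prems(2) False fin] by blast
    have tr: "transition alpha_adm (G, T) (reduct G I, T \<union> I)"
      unfolding trans_adm using I by auto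
    have aI: "admissible G I" "I \<noteq> {}" using I unfolding IS_def by auto
    have ar: "admissible (reduct G I) (S - I)" using adm_rest[OF less.prems(2) aI(1) I(1)] .
    have "card (S - I) < n"
    proof -
      have "S - I \<subset> S" using I(1) aI(2) by blast
      then have "card (S - I) < card S" by (rule psubset_card_mono[OF fin])
      then show ?thesis using less.prems(3) by simp
    qed
    then obtain G' where G': "reaches alpha_adm (reduct G I, T \<union> I) (G', T \<union> I \<union> (S - I))"
      using less.IH[OF _ is_af_reduct[OF less.prems(1)] ar refl] by blast
    have eq: "T \<union> I \<union> (S - I) = T \<union> S" using I by blast
    have r: "(transition alpha_adm)\<^sup>*\<^sup>* (reduct G I, T \<union> I) (G', T \<union> S)"
      using G' unfolding reaches_def eq .
    show ?thesis unfolding reaches_def using converse_rtranclp_into_rtranclp[OF tr r] by blast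
  qed
qed

theorem theorem2:
  shows "serialisable (adm :: 'a af \<Rightarrow> 'a set set) alpha_adm beta_adm"
  unfolding serialisable_def
proof (intro allI impI)
  fix F :: "'a af" assume af: "is_af F"
  show "adm F = serial_ext alpha_adm beta_adm F"
  proof
    show "adm F \<subseteq> serial_ext alpha_adm beta_adm F"
    proof
      fix S assume "S \<in> adm F"
      then have "admissible F S" unfolding adm_def by simp
      then obtain G' where "reaches alpha_adm (F, {}) (G', {} \<union> S)"
        using adm_reach[OF af _ refl, where T = "{}"] by blast
      then show "S \<in> serial_ext alpha_adm beta_adm F"
        unfolding serial_ext_def beta_adm_def mem_Collect_eq by (intro exI[of _ G']) simp
    qed
    show "serial_ext alpha_adm beta_adm F \<subseteq> adm F"
    proof
      fix S assume "S \<in> serial_ext alpha_adm beta_adm F"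
      then obtain G' where "reaches alpha_adm (F, {}) (G', S)" unfolding serial_ext_def by blast
      then show "S \<in> adm F" unfolding adm_def using reach_adm[OF _ af] by blast
    qed
  qed
qed

end
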